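(* Let $n,b$ be integers with $1<n<b$, let $d_0\le d_1\le\cdots\le d_k$ be base-$b$ digits, let $\pi,\sigma$ be permutations of $\{0,\ldots,k\}$, and suppose $p=(d_{\pi(k)},\ldots,d_{\pi(0)})_b=n\cdot(d_{\pi\sigma(k)},\ldots,d_{\pi\sigma(0)})_b$ (an $(n,b,\sigma)$-permutiple) has $j$-th carry equal to $n-1$. If $\{d_0,\ldots,d_k\}$ and $\{\overline{d}_0,\ldots,\overline{d}_k\}$ are the same multiset, then the reflective sibling $$\overline{p}_{\psi^j}=(\overline{d}_{\pi\psi^j(k)},\ldots,\overline{d}_{\pi\psi^j(0)})_b=n\cdot(\overline{d}_{\pi\sigma\psi^j(k)},\ldots,\overline{d}_{\pi\sigma\psi^j(0)})_b$$ may also be represented as $$\overline{p}_{\psi^j}=(d_{\rho\pi\psi^j(k)},\ldots,d_{\rho\pi\psi^j(0)})_b=n\cdot(d_{\rho\pi\sigma\psi^j(k)},\ldots,d_{\rho\pi\sigma\psi^j(0)})_b,$$ where $\rho$ is the reversal permutation $\rho(i)=k-i$.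
   Context: For digits $0\le e_i<b$, $(e_k,\ldots,e_0)_b=\sum_i e_ib^i$ (leading zero digits allowed). A number $(e_k,\ldots,e_0)_b$ is an $(n,b,\sigma)$-permutiple if $(e_k,\ldots,e_0)_b=n\cdot(e_{\sigma(k)},\ldots,e_{\sigma(0)})_b$; here $e_i=d_{\pi(i)}$. Its carries are $c_0=0$, $c_{i+1}=\lfloor (n e_{\sigma(i)}+c_i)/b\rfloor$ ($0\le i\le k$); the $j$-th carry is $c_j$. For a digit $d$ write $\overline{d}=b-1-d$. $\psi$ is the $(k+1)$-cycle $(0,1,\ldots,k)$: $\psi(i)=i+1$ for $i<k$, $\psi(k)=0$. For a carry $c_j=n-1$ (necessarily $0<j\le k$), the reflective sibling of $p$ is the number $\overline{p}_{\psi^j}$ displayed in the claim, which is an $(n,b)$-permutiple satisfying the displayed equation. *)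

theory Defs
  imports "HOL-Combinatorics.Permutations" "HOL-Library.Multiset"
begin

definition digval :: "nat \<Rightarrow> nat \<Rightarrow> (nat \<Rightarrow> nat) \<Rightarrow> nat" where
  "digval b k e = (\<Sum>i=0..k. e i * b ^ i)"

fun carry :: "nat \<Rightarrow> nat \<Rightarrow> (nat \<Rightarrow> nat) \<Rightarrow> nat \<Rightarrow> nat" where
  "carry n b f 0 = 0"
| "carry n b f (Suc i) = (n * f i + carry n b f i) div b"

definition dbar :: "nat \<Rightarrow> nat \<Rightarrow> nat" where
  "dbar b d = b - 1 - d"

definition psi :: "nat \<Rightarrow> nat \<Rightarrow> nat" where
  "psi k i = (if i < k then i + 1 else 0)"

definition rho :: "nat \<Rightarrow> nat \<Rightarrow> nat" where
  "rho k i = k - i"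

end

theory Submission imports Defs begin

lemma psi_pow: "i \<le> k \<Longrightarrow> (psi k ^^ j) i = (i + j) mod Suc k"
proof (induction j)
  case 0 then show ?case by simp
next
  case (Suc j)
  have "(i + Suc j) mod Suc k = Suc (i + j) mod Suc k" by simp
  also have "\<dots> = (if Suc ((i+j) mod Suc k) = Suc k then 0 else Suc ((i+j) mod Suc k))"
    by (rule mod_Suc)
  moreover have "(i+j) mod Suc k = k \<or> (i+j) mod Suc k < k" using mod_less_divisor[of "Suc k" "i+j"] by linarith
  ultimately show ?case using Suc
    by (auto simp: psi_def)
qed

lemma sum_lt: "0 < b \<Longrightarrow> (\<forall>i<m. g i < (b::nat)) \<Longrightarrow> (\<Sum>i<m. g i * b^i) < b^m"
proof (induction m)
  case 0 then show ?case by simp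
next
  case (Suc m)
  have "g m * b^m \<le> (b-1) * b^m" using Suc.prems by auto
  moreover have "(\<Sum>i<m. g i * b^i) < b^m" using Suc by auto
  ultimately have "(\<Sum>i<Suc m. g i * b^i) < b^m + (b-1)*b^m" by (simp add: add_less_le_mono)
  also have "\<dots> = b^Suc m" using Suc.prems(1) by (cases b) (auto simp: algebra_simps)
  finally show ?case .
qed

lemma mod_div_pow: "(y::nat)*b^m = (y mod b)*b^m + (y div b)*b^Suc m"
  by (metis (no_types, lifting) distrib_right mod_mult_div_eq mult.assoc mult.commute power_Suc)

lemma carry_sum: "n * (\<Sum>i<m. f i * b^i) = (\<Sum>i<m. ((n * f i + carry n b f i) mod b) * b^i) + carry n b f m * b^m"
proof (induction m)
  case 0 then show ?case by simp
next
  case (Suc m)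
  let ?x = "n * f m + carry n b f m"
  let ?R = "(\<Sum>i<m. ((n * f i + carry n b f i) mod b) * b^i)"
  have "n * (\<Sum>i<Suc m. f i * b^i) = n * (\<Sum>i<m. f i * b^i) + n * f m * b^m"
    by (simp add: algebra_simps)
  also have "\<dots> = ?R + ?x * b^m"
    by (simp only: Suc.IH) (simp add: distrib_right)
  also have "?x * b^m = (?x mod b) * b^m + (?x div b) * b^Suc m"
    by (rule mod_div_pow)
  finally have "n * (\<Sum>i<Suc m. f i * b^i) = ?R + ((?x mod b) * b^m + (?x div b) * b^Suc m)" .
  moreover have "(\<Sum>i<Suc m. ((n * f i + carry n b f i) mod b) * b^i) = ?R + (?x mod b) * b^m" by simp
  moreover have "carry n b f (Suc m) = ?x div b" by simp
  ultimately show ?case by (simp only: add.assoc)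
qed

lemma split_sum: "j \<le> m \<Longrightarrow> (\<Sum>i<m. g i * (b::nat)^i) = (\<Sum>i<j. g i * b^i) + b^j * (\<Sum>i<m-j. g (i+j) * b^i)"
proof -
  assume "j \<le> m"
  then obtain t where m: "m = j + t" using le_Suc_ex by blast
  have "(\<Sum>i<j+t. g i * (b::nat)^i) = (\<Sum>i<j. g i * b^i) + b^j * (\<Sum>i<t. g (i+j) * b^i)"
    by (induction t) (auto simp: algebra_simps power_add)
  then show ?thesis using m by simp
qed

lemma rot_sum: "j \<le> m \<Longrightarrow> (\<Sum>i<m. g ((i+j) mod m) * (b::nat)^i) = (\<Sum>i<m-j. g (i+j) * b^i) + b^(m-j) * (\<Sum>i<j. g i * b^i)"
proof -
  assume jm: "j \<le> m"
  have "(\<Sum>i<m. g ((i+j) mod m) * (b::nat)^i) = (\<Sum>i<m-j. g ((i+j) mod m) * b^i) + b^(m-j) * (\<Sum>i<m-(m-j). g ((i+(m-j)+j) mod m) * b^i)"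
    by (rule split_sum) simp
  also have "(\<Sum>i<m-j. g ((i+j) mod m) * b^i) = (\<Sum>i<m-j. g (i+j) * b^i)"
    by (rule sum.cong) auto
  also have "(\<Sum>i<m-(m-j). g ((i+(m-j)+j) mod m) * b^i) = (\<Sum>i<j. g i * b^i)"
    using jm by (intro sum.cong) auto
  finally show ?thesis .
qed

lemma comp_sum_nat: "(\<forall>i<m. g i < (b::nat)) \<Longrightarrow> (\<Sum>i<m. (b - 1 - g i) * b^i) + (\<Sum>i<m. g i * b^i) + 1 = b ^ m"
proof (induction m)
  case 0 then show ?case by simp
next
  case (Suc m)
  then have "g m < b" by simp
  then have "b - 1 - g m + g m + 1 = b" by simp
  then have "(b - 1 - g m + g m + 1) * b^m = b^Suc m" by simp
  then have h: "(b - 1 - g m) * b^m + g m * b^m + b^m = b^Suc m"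
    by (simp only: distrib_right mult_1)
  have "(\<Sum>i<Suc m. (b - 1 - g i) * b^i) + (\<Sum>i<Suc m. g i * b^i) + 1
     = ((\<Sum>i<m. (b - 1 - g i) * b^i) + (\<Sum>i<m. g i * b^i) + 1) + ((b - 1 - g m) * b^m + g m * b^m)"
    by simp
  also have "\<dots> = b^m + ((b - 1 - g m) * b^m + g m * b^m)" using Suc by simp
  finally show ?case using h by simp
qed

lemma comp_sum: "(\<forall>i<m. g i < (b::nat)) \<Longrightarrow> int (\<Sum>i<m. (b - 1 - g i) * b^i) = int b ^ m - 1 - int (\<Sum>i<m. g i * b^i)"
proof -
  assume a: "\<forall>i<m. g i < (b::nat)"
  have "int ((\<Sum>i<m. (b - 1 - g i) * b^i) + (\<Sum>i<m. g i * b^i) + 1) = int (b ^ m)"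
    using comp_sum_nat[OF a] by simp
  then show ?thesis by simp
qed

lemma sorted_refl:
  fixes d :: "nat \<Rightarrow> nat" and b k m :: nat
  assumes sorted: "\<forall>i i'. i \<le> i' \<and> i' \<le> k \<longrightarrow> d i \<le> d i'"
    and same_mset: "image_mset d (mset_set {0..k}) = image_mset (\<lambda>i. dbar b (d i)) (mset_set {0..k})"
    and m: "m \<le> k"
  shows "dbar b (d m) = d (k - m)"
proof -
  define xs where "xs = map d [0..<Suc k]"
  define ys where "ys = map (\<lambda>i. dbar b (d (k - i))) [0..<Suc k]"
  have sx: "sorted xs" unfolding xs_def
    using sorted by (auto simp: sorted_iff_nth_mono nth_map_upt less_Suc_eq_le simp del: upt_Suc)
  have sy: "sorted ys" unfolding ys_def
    using sorted by (auto simp: sorted_iff_nth_mono nth_map_upt less_Suc_eq_le dbar_def simp del: upt_Suc intro!: diff_le_mono2)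
  have "ys = rev (map (\<lambda>i. dbar b (d i)) [0..<Suc k])"
    unfolding ys_def by (rule nth_equalityI) (auto simp: rev_nth nth_map_upt simp del: upt_Suc)
  then have "mset ys = image_mset (\<lambda>i. dbar b (d i)) (mset_set {0..k})"
    by (simp add: mset_upt atLeastLessThanSuc_atLeastAtMost del: upt_Suc)
  also have "\<dots> = mset xs" using same_mset
    by (simp add: xs_def mset_upt atLeastLessThanSuc_atLeastAtMost del: upt_Suc)
  finally have "xs = ys" using sx sy
    by (metis properties_for_sort sorted_sort_id)
  then have "xs ! (k - m) = ys ! (k - m)" by simp
  then show ?thesis using m unfolding xs_def ys_def
    by (simp add: nth_map_upt less_Suc_eq_le del: upt_Suc)
qed

theorem corollary22:
  fixes n b k j :: nat and d \<pi> \<sigma> :: "nat \<Rightarrow> nat"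
  assumes "1 < n" and "n < b"
    and digits: "\<forall>i\<le>k. d i < b"
    and sorted: "\<forall>i i'. i \<le> i' \<and> i' \<le> k \<longrightarrow> d i \<le> d i'"
    and perm_pi: "\<pi> permutes {0..k}"
    and perm_sigma: "\<sigma> permutes {0..k}"
    and permutiple: "digval b k (d \<circ> \<pi>) = n * digval b k (d \<circ> \<pi> \<circ> \<sigma>)"
    and "j \<le> k"
    and carry_j: "carry n b (d \<circ> \<pi> \<circ> \<sigma>) j = n - 1"
    and same_mset: "image_mset d (mset_set {0..k}) = image_mset (\<lambda>i. dbar b (d i)) (mset_set {0..k})"
  shows "digval b k (\<lambda>i. dbar b (d (\<pi> ((psi k ^^ j) i))))
           = n * digval b k (\<lambda>i. dbar b (d (\<pi> (\<sigma> ((psi k ^^ j) i)))))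
       \<and> digval b k (\<lambda>i. dbar b (d (\<pi> ((psi k ^^ j) i))))
           = digval b k (\<lambda>i. d (rho k (\<pi> ((psi k ^^ j) i))))
       \<and> digval b k (\<lambda>i. d (rho k (\<pi> ((psi k ^^ j) i))))
           = n * digval b k (\<lambda>i. d (rho k (\<pi> (\<sigma> ((psi k ^^ j) i)))))"
proof -
  note nb = assms(1) assms(2)
  define K where "K = Suc k"
  define e where "e i = d (\<pi> i)" for i
  define f where "f i = d (\<pi> (\<sigma> i))" for i
  define c where "c = carry n b f"
  have b0: "0 < b" using nb by simp
  have pik: "\<pi> i \<le> k" if "i \<le> k" for i
    using permutes_in_image[OF perm_pi, of i] that by simp
  have sik: "\<sigma> i \<le> k" if "i \<le> k" for i
    using permutes_in_image[OF perm_sigma, of i] that by simp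
  have de: "\<forall>i<K. e i < b" using digits pik by (simp add: K_def e_def less_Suc_eq_le)
  have df: "\<forall>i<K. f i < b" using digits pik sik by (simp add: K_def f_def less_Suc_eq_le)
  have dv: "digval b k g = (\<Sum>i<K. g i * b^i)" for g
    by (simp add: digval_def K_def atLeast0AtMost lessThan_Suc_atMost)
  define E where "E = (\<Sum>i<K. e i * b^i)"
  define F where "F = (\<Sum>i<K. f i * b^i)"
  define R where "R = (\<Sum>i<K. ((n * f i + c i) mod b) * b^i)"
  have EF: "E = n * F" using permutiple unfolding dv E_def F_def e_def f_def by (simp add: comp_def)
  have cK: "n * F = R + c K * b^K" unfolding F_def R_def c_def by (rule carry_sum)
  have RL: "R < b^K" unfolding R_def using b0 by (intro sum_lt) auto
  have EL: "E < b^K" unfolding E_def using b0 de by (intro sum_lt) auto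
  have "c K = 0"
  proof (rule ccontr)
    assume "c K \<noteq> 0"
    then have "b^K \<le> c K * b^K" by simp
    then show False using cK EL EF by linarith
  qed
  then have RE: "R = E" using cK EF by simp
  have jK: "j \<le> K" using \<open>j \<le> k\<close> by (simp add: K_def)
  define loE where "loE = (\<Sum>i<j. e i * b^i)"
  define hiE where "hiE = (\<Sum>i<K-j. e (i+j) * b^i)"
  define loF where "loF = (\<Sum>i<j. f i * b^i)"
  define hiF where "hiF = (\<Sum>i<K-j. f (i+j) * b^i)"
  define loR where "loR = (\<Sum>i<j. ((n * f i + c i) mod b) * b^i)"
  define hiR where "hiR = (\<Sum>i<K-j. ((n * f (i+j) + c (i+j)) mod b) * b^i)"
  have sE: "E = loE + b^j * hiE" unfolding E_def loE_def hiE_def by (rule split_sum[OF jK])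
  have sF: "F = loF + b^j * hiF" unfolding F_def loF_def hiF_def by (rule split_sum[OF jK])
  have sR: "R = loR + b^j * hiR" unfolding R_def loR_def hiR_def by (rule split_sum[OF jK])
  have loRL: "loR < b^j" unfolding loR_def using b0 by (intro sum_lt) auto
  have loEL: "loE < b^j" unfolding loE_def using b0 de jK by (intro sum_lt) auto
  have "loR = R mod b^j" using sR loRL by simp
  also have "\<dots> = E mod b^j" using RE by simp
  also have "\<dots> = loE" using sE loEL by simp
  finally have loRE: "loR = loE" .
  have cj: "n * loF = loR + c j * b^j" unfolding loF_def loR_def c_def by (rule carry_sum)
  have fd: "d \<circ> \<pi> \<circ> \<sigma> = f" by (auto simp: f_def)
  have "c j = n - 1" using carry_j unfolding fd c_def .
  with cj loRE have nloF: "n * loF = loE + (n - 1) * b^j" by simp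
  have "b^j * hiE = b^j * ((n - 1) + n * hiF)"
  proof -
    have "loE + b^j * hiE = n * loF + n * (b^j * hiF)" using sE sF EF by (simp add: algebra_simps)
    also have "\<dots> = loE + b^j * ((n - 1) + n * hiF)" using nloF by (simp add: algebra_simps)
    finally show ?thesis by simp
  qed
  then have hiEF: "hiE = (n - 1) + n * hiF" using b0 by simp
  define P where "P = b^(K-j)"
  have PB: "P * b^j = b^K" unfolding P_def using jK by (simp add: power_add[symmetric])
  define RtE where "RtE = (\<Sum>i<K. e ((i+j) mod K) * b^i)"
  define RtF where "RtF = (\<Sum>i<K. f ((i+j) mod K) * b^i)"
  have rE: "RtE = hiE + P * loE" unfolding RtE_def hiE_def P_def loE_def by (rule rot_sum[OF jK])
  have rF: "RtF = hiF + P * loF" unfolding RtF_def hiF_def P_def loF_def by (rule rot_sum[OF jK])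
  have pp: "(psi k ^^ j) i = (i + j) mod K" if "i < K" for i
    using psi_pow[of i k j] that by (simp add: K_def)
  have modK: "(i + j) mod K < K" for i unfolding K_def by simp
  have deR: "\<forall>i<K. e ((i+j) mod K) < b" using de modK by blast
  have dfR: "\<forall>i<K. f ((i+j) mod K) < b" using df modK by blast
  have S1: "digval b k (\<lambda>i. dbar b (d (\<pi> ((psi k ^^ j) i)))) = (\<Sum>i<K. (b - 1 - e ((i+j) mod K)) * b^i)"
    unfolding dv by (rule sum.cong) (auto simp: pp dbar_def e_def)
  have S2: "digval b k (\<lambda>i. dbar b (d (\<pi> (\<sigma> ((psi k ^^ j) i))))) = (\<Sum>i<K. (b - 1 - f ((i+j) mod K)) * b^i)"
    unfolding dv by (rule sum.cong) (auto simp: pp dbar_def f_def)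
  have iS1: "int (digval b k (\<lambda>i. dbar b (d (\<pi> ((psi k ^^ j) i))))) = int b ^ K - 1 - int RtE"
    unfolding S1 RtE_def by (rule comp_sum[OF deR])
  have iS2: "int (digval b k (\<lambda>i. dbar b (d (\<pi> (\<sigma> ((psi k ^^ j) i)))))) = int b ^ K - 1 - int RtF"
    unfolding S2 RtF_def by (rule comp_sum[OF dfR])
  have n1: "int (n - 1) = int n - 1" using nb by simp
  have i1: "int hiE = (int n - 1) + int n * int hiF" using arg_cong[OF hiEF, of int] n1 by simp
  have i2: "int n * int loF = int loE + (int n - 1) * int b ^ j" using arg_cong[OF nloF, of int] n1 by simp
  have i3: "int RtE = int hiE + int P * int loE" using arg_cong[OF rE, of int] by simp
  have i4: "int RtF = int hiF + int P * int loF" using arg_cong[OF rF, of int] by simp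
  have i5: "int P * int b ^ j = int b ^ K" using arg_cong[OF PB, of int] by simp
  have "int n * int RtF = int n * int hiF + int P * (int n * int loF)" using i4 by (simp add: algebra_simps)
  also have "\<dots> = int n * int hiF + int P * int loE + (int n - 1) * (int P * int b ^ j)"
    by (simp only: i2) (simp add: algebra_simps)
  also have "\<dots> = int RtE + (int n - 1) * (int b ^ K - 1)" using i1 i3 i5 by (simp add: algebra_simps)
  finally have key: "int n * int RtF = int RtE + (int n - 1) * (int b ^ K - 1)" .
  have "int (digval b k (\<lambda>i. dbar b (d (\<pi> ((psi k ^^ j) i)))))
      = int n * int (digval b k (\<lambda>i. dbar b (d (\<pi> (\<sigma> ((psi k ^^ j) i))))))"
    unfolding iS1 iS2 using key by (simp add: algebra_simps)
  then have part1: "digval b k (\<lambda>i. dbar b (d (\<pi> ((psi k ^^ j) i))))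
      = n * digval b k (\<lambda>i. dbar b (d (\<pi> (\<sigma> ((psi k ^^ j) i)))))"
    by (metis of_nat_eq_iff of_nat_mult)
  have refl: "dbar b (d m) = d (rho k m)" if "m \<le> k" for m
    using sorted_refl[OF sorted same_mset that] by (simp add: rho_def)
  have ppk: "(psi k ^^ j) i \<le> k" if "i < K" for i
    using pp[OF that] modK[of i] by (simp add: K_def)
  have part2: "digval b k (\<lambda>i. dbar b (d (\<pi> ((psi k ^^ j) i))))
           = digval b k (\<lambda>i. d (rho k (\<pi> ((psi k ^^ j) i))))"
    unfolding dv by (rule sum.cong) (auto simp: refl pik ppk)
  have part3: "digval b k (\<lambda>i. dbar b (d (\<pi> (\<sigma> ((psi k ^^ j) i)))))
           = digval b k (\<lambda>i. d (rho k (\<pi> (\<sigma> ((psi k ^^ j) i)))))"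
    unfolding dv by (rule sum.cong) (auto simp: refl pik sik ppk)
  show ?thesis using part1 part2 part3 by simp
qed

end
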